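(* Let $\omega=\frac{-1+\sqrt{-3}}{2}$ and let $\frac rs$ be a rational number in lowest terms with $s>0$. If $\mathcal{S}_{\frac rs}(-\omega)=0$, or equivalently $q^2-q+1$ divides $\mathcal{S}_{\frac rs}(q)$, then $s$ is a multiple of $6$.
   Context: Let $q$ be a formal parameter, $R_q=\begin{pmatrix} q & 1\\ 0 & 1\end{pmatrix}$, $S_q=\begin{pmatrix} 0 & -q^{-1}\\ 1 & 0\end{pmatrix}$, and for integers $c_1,\dots,c_k$ put $M_q(c_1,\dots,c_k)=R_q^{c_1}S_q\cdots R_q^{c_k}S_q$. Every irreducible fraction $\frac{r}{s}>1$ has a unique negative continued fraction expansion $\frac{r}{s}=c_1-\cfrac{1}{c_2-\cfrac{1}{\ddots-\cfrac{1}{c_k}}}$ with all $c_i\ge 2$; define $\mathcal{S}_{\frac rs}(q)$ as the $(2,1)$-entry of $M_q(c_1,\dots,c_k)$. For an arbitrary rational $x$, define $\mathcal{S}_x(q):=\mathcal{S}_{x+m}(q)$ for any integer $m$ with $x+m>1$ (independent of $m$). Thus $\mathcal{S}_x(q)\in\mathbb{Z}[q]$ is the denominator of the $q$-deformed rational $[x]_q$, with $\mathcal{S}_x(0)=1$, and $\mathcal{S}_{\frac rs}(1)=s$. *)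

theory Defs
  imports Complex_Main
begin

text \<open>2x2 matrices over a field, written as tuples (a,b,c,d) = [[a,b],[c,d]].\<close>
type_synonym 'a mat2 = "'a \<times> 'a \<times> 'a \<times> 'a"

fun mmul :: "'a::field mat2 \<Rightarrow> 'a mat2 \<Rightarrow> 'a mat2" where
  "mmul (a,b,c,d) (e,f,g,h) = (a*e+b*g, a*f+b*h, c*e+d*g, c*f+d*h)"

definition mid :: "'a::field mat2" where "mid = (1,0,0,1)"

fun mpow :: "'a::field mat2 \<Rightarrow> nat \<Rightarrow> 'a mat2" where
  "mpow M 0 = mid"
| "mpow M (Suc n) = mmul (mpow M n) M"

fun entry21 :: "'a mat2 \<Rightarrow> 'a" where
  "entry21 (a,b,c,d) = c"

definition Rq :: "'a::field \<Rightarrow> 'a mat2" where "Rq q = (q, 1, 0, 1)"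
definition Sq :: "'a::field \<Rightarrow> 'a mat2" where "Sq q = (0, - inverse q, 1, 0)"

fun Mq :: "'a::field \<Rightarrow> int list \<Rightarrow> 'a mat2" where
  "Mq q [] = mid"
| "Mq q (c # cs) = mmul (mmul (mpow (Rq q) (nat c)) (Sq q)) (Mq q cs)"

fun negcf :: "int list \<Rightarrow> rat" where
  "negcf [] = 0"
| "negcf [c] = of_int c"
| "negcf (c # cs) = of_int c - 1 / negcf cs"

definition hj_expansion :: "rat \<Rightarrow> int list" where
  "hj_expansion x = (THE cs. cs \<noteq> [] \<and> (\<forall>c\<in>set cs. c \<ge> 2) \<and> negcf cs = x)"

definition S_gt1 :: "'a::field \<Rightarrow> rat \<Rightarrow> 'a" where
  "S_gt1 q x = entry21 (Mq q (hj_expansion x))"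

text \<open>S_x(q) for arbitrary rational x: shift by the integer m = 2 - floor x, so x + m > 1.\<close>
definition S_rat :: "'a::field \<Rightarrow> rat \<Rightarrow> 'a" where
  "S_rat q x = S_gt1 q (x + of_int (2 - \<lfloor>x\<rfloor>))"

definition omega :: complex where "omega = Complex (-1/2) (sqrt 3 / 2)"

end

theory Submission
  imports Defs
begin

fun mv :: "'a::field mat2 \<Rightarrow> 'a \<times> 'a \<Rightarrow> 'a \<times> 'a" where
  "mv (a,b,c,d) (x,y) = (a*x+b*y, c*x+d*y)"

lemma mv_mmul: "mv (mmul A B) v = mv A (mv B v)"
  by (cases A; cases B; cases v) (simp add: algebra_simps)

lemma mv_mid: "mv mid v = v"
  by (cases v) (simp add: mid_def)

lemma entry21_mv: "entry21 M = snd (mv M (1,0))"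
  by (cases M) simp

lemma mv_mpow_Suc: "mv (mpow M (Suc n)) v = mv (mpow M n) (mv M v)"
  by (simp add: mv_mmul)

definition qq :: complex where "qq = - omega"

lemma qq_sq: "qq * qq = qq - 1"
proof -
  have s: "sqrt 3 * sqrt 3 = (3::real)" by simp
  show ?thesis unfolding qq_def omega_def
    by (simp add: complex_eq_iff s algebra_simps)
qed

lemma qq_inv: "inverse qq = 1 - qq"
proof -
  have "qq * (1 - qq) = 1" using qq_sq by (simp add: algebra_simps)
  then show ?thesis by (metis inverse_unique)
qed

lemma qq_Im: "Im qq = - sqrt 3 / 2"
  by (simp add: qq_def omega_def)

lemma eis_zero:
  assumes "of_int x + of_int y * qq = (0::complex)"
  shows "x = 0 \<and> y = 0"
proof -
  have "Im (of_int x + of_int y * qq) = 0" using assms by simp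
  then have "of_int y * (- sqrt 3 / 2) = (0::real)" by (simp add: qq_Im)
  then have y: "y = 0" by simp
  with assms show ?thesis by simp
qed

section \<open>Integer side\<close>

fun R1 :: "int \<times> int \<Rightarrow> int \<times> int" where "R1 (a,c) = (a+c, c)"
fun S1 :: "int \<times> int \<Rightarrow> int \<times> int" where "S1 (a,c) = (-c, a)"

fun col1 :: "int list \<Rightarrow> int \<times> int" where
  "col1 [] = (1,0)"
| "col1 (c # cs) = (R1 ^^ nat c) (S1 (col1 cs))"

lemma R1_pow: "(R1 ^^ n) (a,c) = (a + int n * c, c)"
  by (induction n) (auto simp: algebra_simps)

section \<open>Invariants\<close>

definition INVA :: "int \<Rightarrow> int \<Rightarrow> int \<Rightarrow> int \<Rightarrow> int \<Rightarrow> int \<Rightarrow> bool" where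
  "INVA x0 y0 x1 y1 a1 c1 \<longleftrightarrow>
   (even x1 \<and> even y1 \<and> \<not>(even x0 \<and> even y0) \<and> 3 dvd c1) \<or>
   (even x0 \<and> even y0 \<and> \<not>(even x1 \<and> even y1) \<and> 3 dvd a1) \<or>
   (even (x0-x1) \<and> even (y0-y1) \<and> \<not>(even x0 \<and> even y0) \<and> 3 dvd (a1-c1)) \<or>
   (even (x1-y0) \<and> even (y1-x0-y0) \<and> \<not>(even x0 \<and> even y0) \<and> 3 dvd (a1+c1))"

definition INVB :: "int \<Rightarrow> int \<Rightarrow> int \<Rightarrow> int \<Rightarrow> int \<Rightarrow> int \<Rightarrow> bool" where
  "INVB x0 y0 x1 y1 a1 c1 \<longleftrightarrow>
   (3 dvd (x1-y1) \<and> \<not> 3 dvd (x0-y0) \<and> even c1) \<or>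
   (3 dvd (x0-y0) \<and> \<not> 3 dvd (x1-y1) \<and> even a1) \<or>
   (3 dvd (x0-y0-x1+y1) \<and> \<not> 3 dvd (x0-y0) \<and> even (a1-c1))"

lemma INVA_R: "INVA x0 y0 x1 y1 a1 c1 \<Longrightarrow> INVA (x1-y0) (x0+y0+y1) x1 y1 (a1+c1) c1"
  unfolding INVA_def by presburger

lemma INVA_S: "INVA x0 y0 x1 y1 a1 c1 \<Longrightarrow> INVA (-(x1+y1)) x1 x0 y0 (-c1) a1"
  unfolding INVA_def by presburger

lemma INVB_R: "INVB x0 y0 x1 y1 a1 c1 \<Longrightarrow> INVB (x1-y0) (x0+y0+y1) x1 y1 (a1+c1) c1"
  unfolding INVB_def by presburger

lemma INVB_S: "INVB x0 y0 x1 y1 a1 c1 \<Longrightarrow> INVB (-(x1+y1)) x1 x0 y0 (-c1) a1"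
  unfolding INVB_def by presburger

definition J :: "complex \<times> complex \<Rightarrow> int \<times> int \<Rightarrow> bool" where
  "J v w \<longleftrightarrow> (\<exists>x0 y0 x1 y1. v = (of_int x0 + of_int y0 * qq, of_int x1 + of_int y1 * qq)
      \<and> INVA x0 y0 x1 y1 (fst w) (snd w) \<and> INVB x0 y0 x1 y1 (fst w) (snd w))"

lemma J_R: assumes "J v w" shows "J (mv (Rq qq) v) (R1 w)"
proof -
  obtain x0 y0 x1 y1 where v: "v = (of_int x0 + of_int y0 * qq, of_int x1 + of_int y1 * qq)"
    and A: "INVA x0 y0 x1 y1 (fst w) (snd w)" and B: "INVB x0 y0 x1 y1 (fst w) (snd w)"
    using assms unfolding J_def by blast
  obtain a1 c1 where w: "w = (a1,c1)" by (cases w)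
  have e: "qq * (of_int x0 + of_int y0 * qq) + (of_int x1 + of_int y1 * qq)
      = of_int (x1-y0) + of_int (x0+y0+y1) * qq"
  proof -
    have "qq * (of_int x0 + of_int y0 * qq) + (of_int x1 + of_int y1 * qq)
        = of_int x0 * qq + of_int y0 * (qq*qq) + of_int x1 + of_int y1 * qq"
      by (simp add: algebra_simps)
    also have "\<dots> = of_int (x1-y0) + of_int (x0+y0+y1) * qq"
      by (simp add: qq_sq algebra_simps)
    finally show ?thesis .
  qed
  have "mv (Rq qq) v = (of_int (x1-y0) + of_int (x0+y0+y1) * qq, of_int x1 + of_int y1 * qq)"
    using e by (simp add: v Rq_def)
  moreover have "INVA (x1-y0) (x0+y0+y1) x1 y1 (fst (R1 w)) (snd (R1 w))"
    using INVA_R[of x0 y0 x1 y1 a1 c1] A by (simp add: w)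
  moreover have "INVB (x1-y0) (x0+y0+y1) x1 y1 (fst (R1 w)) (snd (R1 w))"
    using INVB_R[of x0 y0 x1 y1 a1 c1] B by (simp add: w)
  ultimately show ?thesis unfolding J_def by blast
qed

lemma J_S: assumes "J v w" shows "J (mv (Sq qq) v) (S1 w)"
proof -
  obtain x0 y0 x1 y1 where v: "v = (of_int x0 + of_int y0 * qq, of_int x1 + of_int y1 * qq)"
    and A: "INVA x0 y0 x1 y1 (fst w) (snd w)" and B: "INVB x0 y0 x1 y1 (fst w) (snd w)"
    using assms unfolding J_def by blast
  obtain a1 c1 where w: "w = (a1,c1)" by (cases w)
  have e: "- inverse qq * (of_int x1 + of_int y1 * qq)
      = of_int (-(x1+y1)) + of_int x1 * qq"
  proof -
    have "- inverse qq * (of_int x1 + of_int y1 * qq)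
        = (qq - 1) * of_int x1 + of_int y1 * (qq*qq) - of_int y1 * qq"
      by (simp add: qq_inv algebra_simps)
    also have "\<dots> = of_int (-(x1+y1)) + of_int x1 * qq"
      by (simp add: qq_sq algebra_simps)
    finally show ?thesis .
  qed
  have "mv (Sq qq) v = (of_int (-(x1+y1)) + of_int x1 * qq, of_int x0 + of_int y0 * qq)"
    using e by (simp add: v Sq_def)
  moreover have "INVA (-(x1+y1)) x1 x0 y0 (fst (S1 w)) (snd (S1 w))"
    using INVA_S[of x0 y0 x1 y1 a1 c1] A by (simp add: w)
  moreover have "INVB (-(x1+y1)) x1 x0 y0 (fst (S1 w)) (snd (S1 w))"
    using INVB_S[of x0 y0 x1 y1 a1 c1] B by (simp add: w)
  ultimately show ?thesis unfolding J_def by blast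
qed

lemma J_Rpow: "J v w \<Longrightarrow> J (mv (mpow (Rq qq) n) v) ((R1 ^^ n) w)"
proof (induction n arbitrary: v w)
  case 0
  then show ?case by (simp add: mv_mid)
next
  case (Suc n)
  have "J (mv (mpow (Rq qq) n) (mv (Rq qq) v)) ((R1 ^^ n) (R1 w))"
    using Suc.IH J_R Suc.prems by blast
  then show ?case by (simp only: mv_mpow_Suc funpow_Suc_right o_apply)
qed

lemma J_Mq: "J (mv (Mq qq cs) (1,0)) (col1 cs)"
proof (induction cs)
  case Nil
  have "J (1,0) (1,0)" unfolding J_def INVA_def INVB_def
    by (rule exI[of _ 1], rule exI[of _ 0], rule exI[of _ 0], rule exI[of _ 0]) simp
  then show ?case by (simp add: mv_mid)
next
  case (Cons c cs)
  show ?case using J_Rpow[OF J_S[OF Cons.IH]] by (simp add: mv_mmul)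
qed

lemma J_zero:
  assumes "J v w" and "snd v = 0"
  shows "6 dvd snd w"
proof -
  obtain x0 y0 x1 y1 where v: "v = (of_int x0 + of_int y0 * qq, of_int x1 + of_int y1 * qq)"
    and A: "INVA x0 y0 x1 y1 (fst w) (snd w)" and B: "INVB x0 y0 x1 y1 (fst w) (snd w)"
    using assms unfolding J_def by blast
  have "x1 = 0 \<and> y1 = 0" using eis_zero assms(2) v by simp
  then show ?thesis using A B unfolding INVA_def INVB_def by presburger
qed

section \<open>Negative continued fractions\<close>

definition valid :: "int list \<Rightarrow> bool" where
  "valid cs \<longleftrightarrow> cs \<noteq> [] \<and> (\<forall>c\<in>set cs. c \<ge> 2)"

lemma negcf_Cons: "negcf (c # cs) = of_int c - 1 / negcf cs"
  by (cases cs) auto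

lemma negcf_gt1: "valid cs \<Longrightarrow> negcf cs > 1"
proof (induction cs)
  case Nil then show ?case by (simp add: valid_def)
next
  case (Cons c cs)
  show ?case
  proof (cases "cs = []")
    case True then show ?thesis using Cons.prems by (simp add: valid_def)
  next
    case False
    then have "negcf cs > 1" using Cons by (simp add: valid_def)
    then have "1 / negcf cs < 1" by simp
    moreover have "c \<ge> 2" using Cons.prems by (simp add: valid_def)
    ultimately show ?thesis by (simp add: negcf_Cons)
  qed
qed

lemma negcf_long_bounds:
  assumes "valid (c # cs)" "cs \<noteq> []"
  shows "of_int c - 1 < negcf (c # cs) \<and> negcf (c # cs) < of_int c"
proof -
  have "valid cs" using assms by (simp add: valid_def)
  then have g: "negcf cs > 1" by (rule negcf_gt1)
  then have "0 < 1 / negcf cs" "1 / negcf cs < 1" by simp_all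
  then show ?thesis by (simp add: negcf_Cons)
qed

lemma negcf_unique:
  "valid cs \<Longrightarrow> valid ds \<Longrightarrow> negcf cs = negcf ds \<Longrightarrow> cs = ds"
proof (induction cs arbitrary: ds)
  case Nil then show ?case by (simp add: valid_def)
next
  case (Cons c cs)
  obtain d ds' where ds: "ds = d # ds'" using Cons.prems(2) by (cases ds) (auto simp: valid_def)
  show ?case
  proof (cases "cs = []")
    case True
    show ?thesis
    proof (cases "ds' = []")
      case True
      then show ?thesis using Cons.prems \<open>cs = []\<close> ds by simp
    next
      case False
      have b: "of_int d - 1 < negcf ds \<and> negcf ds < of_int d"
        using negcf_long_bounds[of d ds'] Cons.prems(2) False ds by simp
      have "negcf ds = of_int c" using Cons.prems(3) \<open>cs = []\<close> by simp
      then have "of_int (d - 1) < (of_int c :: rat) \<and> (of_int c :: rat) < of_int d" using b by simp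
      then have "d - 1 < c \<and> c < d" by linarith
      then have False by linarith
      then show ?thesis ..
    qed
  next
    case False
    have bc: "of_int c - 1 < negcf (c#cs) \<and> negcf (c#cs) < of_int c"
      using negcf_long_bounds[of c cs] Cons.prems(1) False by simp
    show ?thesis
    proof (cases "ds' = []")
      case True
      have "negcf (c#cs) = of_int d" using Cons.prems(3) True ds by simp
      then have "of_int (c - 1) < (of_int d :: rat) \<and> (of_int d :: rat) < of_int c" using bc by simp
      then have "c - 1 < d \<and> d < c" by linarith
      then have False by linarith
      then show ?thesis ..
    next
      case F2: False
      have bd: "of_int d - 1 < negcf ds \<and> negcf ds < of_int d"
        using negcf_long_bounds[of d ds'] Cons.prems(2) F2 ds by simp
      have "of_int (c - 1) < (of_int d :: rat)" "of_int (d - 1) < (of_int c :: rat)"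
        using bc bd Cons.prems(3) by simp_all
      then have cd: "c = d" by linarith
      then have "1 / negcf cs = 1 / negcf ds'" using Cons.prems(3) ds by (simp add: negcf_Cons)
      then have "negcf cs = negcf ds'" by simp
      moreover have "valid cs" "valid ds'" using Cons.prems(1,2) False F2 ds by (auto simp: valid_def)
      ultimately have "cs = ds'" using Cons.IH by blast
      then show ?thesis using cd ds by simp
    qed
  qed
qed

lemma negcf_exists:
  "0 < s \<Longrightarrow> s < r \<Longrightarrow> \<exists>cs. valid cs \<and> negcf cs = of_int r / of_int s"
proof (induction "nat s" arbitrary: r s rule: less_induct)
  case less
  show ?case
  proof (cases "s dvd r")
    case True
    then obtain k where k: "r = s * k" by blast
    have "k \<ge> 2"
    proof (rule ccontr)
      assume "\<not> k \<ge> 2"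
      then have "k \<le> 1" by simp
      then have "s * k \<le> s * 1" using less.prems(1) by (intro mult_left_mono) auto
      then show False using k less.prems by simp
    qed
    moreover have "(of_int r / of_int s :: rat) = of_int k" using k less.prems(1) by simp
    ultimately show ?thesis by (intro exI[of _ "[k]"]) (simp add: valid_def)
  next
    case False
    define c where "c = r div s + 1"
    define t where "t = c * s - r"
    have rs: "r = s * (r div s) + r mod s" by simp
    have "r mod s \<noteq> 0" using False by (simp add: dvd_eq_mod_eq_0)
    moreover have "r mod s \<ge> 0" using less.prems(1) by simp
    ultimately have m0: "r mod s > 0" by simp
    have m1: "r mod s < s" using less.prems(1) by simp
    have t: "t = s - r mod s" unfolding t_def c_def using rs by (simp add: algebra_simps)
    have t0: "0 < t" "t < s" using t m0 m1 by simp_all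
    have "s div s \<le> r div s" using less.prems by (intro zdiv_mono1) auto
    then have "r div s \<ge> 1" using less.prems by simp
    then have c2: "c \<ge> 2" by (simp add: c_def)
    from less.hyps[of t s] t0 obtain ds where ds: "valid ds" "negcf ds = of_int s / of_int t"
      by (metis nat_less_eq_zless less_le_not_le)
    have "negcf (c # ds) = of_int c - of_int t / of_int s" using ds by (simp add: negcf_Cons)
    also have "\<dots> = of_int r / of_int s"
      using less.prems(1) unfolding t_def by (simp add: field_simps)
    finally show ?thesis using ds c2 by (intro exI[of _ "c # ds"]) (simp add: valid_def)
  qed
qed

lemma hj_props:
  assumes "0 < s" "s < r"
  shows "valid (hj_expansion (of_int r / of_int s)) \<and>
         negcf (hj_expansion (of_int r / of_int s)) = of_int r / of_int s"
proof -
  let ?x = "of_int r / of_int s :: rat"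
  have ex: "\<exists>!cs. cs \<noteq> [] \<and> (\<forall>c\<in>set cs. c \<ge> 2) \<and> negcf cs = ?x"
    using negcf_exists[OF assms] negcf_unique unfolding valid_def by metis
  show ?thesis using theI'[OF ex] unfolding hj_expansion_def valid_def by blast
qed

lemma col1_props:
  "valid cs \<Longrightarrow> negcf cs = of_int (fst (col1 cs)) / of_int (snd (col1 cs))
     \<and> 0 < snd (col1 cs) \<and> snd (col1 cs) < fst (col1 cs)
     \<and> coprime (fst (col1 cs)) (snd (col1 cs))"
proof (induction cs)
  case Nil then show ?case by (simp add: valid_def)
next
  case (Cons c cs)
  have c2: "c \<ge> 2" using Cons.prems by (simp add: valid_def)
  show ?case
  proof (cases "cs = []")
    case True
    then show ?thesis using c2 by (simp add: R1_pow)
  next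
    case False
    obtain p t where pt: "col1 cs = (p,t)" by (cases "col1 cs")
    have IH: "negcf cs = of_int p / of_int t" "0 < t" "t < p" "coprime p t"
      using Cons False pt by (auto simp: valid_def)
    have col: "col1 (c # cs) = (c * p - t, p)" using pt c2 by (simp add: R1_pow algebra_simps)
    have "negcf (c # cs) = of_int c - of_int t / of_int p"
      using IH by (simp add: negcf_Cons)
    also have "\<dots> = of_int (c*p - t) / of_int p" using IH by (simp add: field_simps)
    finally have e: "negcf (c # cs) = of_int (c*p - t) / of_int p" .
    have "2 * p \<le> c * p" using c2 IH by (intro mult_right_mono) auto
    then have lt: "p < c * p - t" using IH by linarith
    have "coprime t p" using IH by (simp add: coprime_commute)
    have "gcd p (c * p + (-t)) = gcd p (-t)" by (rule gcd_add_mult)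
    then have "gcd (c * p - t) p = 1" using \<open>coprime t p\<close>
      by (simp add: coprime_iff_gcd_eq_1 gcd.commute)
    then have "coprime (c * p - t) p" by (simp add: coprime_iff_gcd_eq_1)
    then show ?thesis using col e lt IH by simp
  qed
qed

lemma frac_eq:
  fixes a b c d :: int
  assumes "0 < b" "0 < d" "coprime a b" "coprime c d"
    and "(of_int a / of_int b :: rat) = of_int c / of_int d"
  shows "b = d"
proof -
  have "of_int a * of_int d = (of_int c * of_int b :: rat)"
    using assms by (simp add: field_simps)
  then have e: "a * d = c * b" by (metis of_int_eq_iff of_int_mult)
  have "b dvd a * d" using e by simp
  then have "b dvd d" using assms(3) by (metis coprime_commute coprime_dvd_mult_right_iff)
  moreover have "d dvd c * b" using e by (metis dvd_triv_right)
  then have "d dvd b" using assms(4) by (metis coprime_commute coprime_dvd_mult_right_iff)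
  ultimately show ?thesis using assms(1,2) by (simp add: zdvd_antisym_nonneg)
qed

theorem proposition5p3:
  fixes r s :: int
  assumes "s > 0" and "coprime r s"
    and "S_rat (- omega) (of_int r / of_int s) = 0"
  shows "6 dvd s"
proof -
  let ?x = "of_int r / of_int s :: rat"
  define m where "m = 2 - \<lfloor>?x\<rfloor>"
  define R where "R = r + m * s"
  have xR: "?x + of_int m = of_int R / of_int s"
    using assms(1) unfolding R_def by (simp add: field_simps)
  have "of_int \<lfloor>?x\<rfloor> \<le> ?x" by (rule of_int_floor_le)
  then have "?x + of_int m \<ge> 2" unfolding m_def by simp
  then have "(of_int R / of_int s :: rat) > 1" using xR by simp
  then have sR: "s < R" using assms(1) by (simp add: field_simps)
  have "gcd s (m * s + r) = gcd s r" by (rule gcd_add_mult)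
  then have cop: "coprime R s" unfolding R_def using assms(2)
    by (simp add: coprime_iff_gcd_eq_1 gcd.commute add.commute)
  define cs where "cs = hj_expansion (of_int R / of_int s)"
  have v: "valid cs" and ncs: "negcf cs = of_int R / of_int s"
    using hj_props[OF assms(1) sR] unfolding cs_def by auto
  have cp: "negcf cs = of_int (fst (col1 cs)) / of_int (snd (col1 cs))"
     "0 < snd (col1 cs)" "coprime (fst (col1 cs)) (snd (col1 cs))"
    using col1_props[OF v] by auto
  have sEq: "s = snd (col1 cs)"
    using frac_eq[OF assms(1) cp(2) cop cp(3)] ncs cp(1) by simp
  have "S_rat qq ?x = entry21 (Mq qq cs)"
    unfolding S_rat_def S_gt1_def cs_def m_def[symmetric] xR by simp
  then have "snd (mv (Mq qq cs) (1,0)) = 0"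
    using assms(3) by (simp add: qq_def entry21_mv)
  then have "6 dvd snd (col1 cs)" using J_zero[OF J_Mq] by blast
  then show ?thesis using sEq by simp
qed

end
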